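(* Let $p$ be a prime, $n$ a positive integer, and for $j=0,\dots,p-1$ let $f_j:\mathbb{F}_p^n\to\mathbb{F}_p$ be functions. Define $F:\mathbb{F}_p^{n+2}=\mathbb{F}_p^n\times\mathbb{F}_p\times\mathbb{F}_p\to\mathbb{F}_p$ by \[F(x,x_{n+1},y)=f_y(x)+x_{n+1}y,\] where $f_y$ denotes $f_j$ for $j$ the element $y\in\mathbb{F}_p=\{0,\dots,p-1\}$. Then $F$ is bent if and only if $f_j$ is bent for every $0\le j\le p-1$.
   Context: On $\mathbb{F}_p^N$ use the standard dot product. Walsh transform: $\widehat f(b)=\sum_{x\in\mathbb{F}_p^N}\epsilon_p^{f(x)-b\cdot x}$, $\epsilon_p=e^{2\pi i/p}$; $f$ is bent if $|\widehat f(b)|=p^{N/2}$ for all $b\in\mathbb{F}_p^N$. *)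

theory Defs
  imports Complex_Main "HOL-Computational_Algebra.Primes"
begin

text \<open>F_p^N is represented by integer vectors \<open>nat \<Rightarrow> int\<close> whose first N
  components lie in {0..p-1} and whose other components are 0.\<close>
definition vecs :: "nat \<Rightarrow> nat \<Rightarrow> (nat \<Rightarrow> int) set" where
  "vecs p N = {x. (\<forall>i<N. 0 \<le> x i \<and> x i < int p) \<and> (\<forall>i\<ge>N. x i = 0)}"

definition dotp :: "nat \<Rightarrow> (nat \<Rightarrow> int) \<Rightarrow> (nat \<Rightarrow> int) \<Rightarrow> int" where
  "dotp N b x = (\<Sum>i<N. b i * x i)"

definition epsp :: "nat \<Rightarrow> int \<Rightarrow> complex" where
  "epsp p k = exp (2 * of_real pi * \<i> * of_int k / of_nat p)"

definition walsh :: "nat \<Rightarrow> nat \<Rightarrow> ((nat \<Rightarrow> int) \<Rightarrow> int) \<Rightarrow> (nat \<Rightarrow> int) \<Rightarrow> complex" where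
  "walsh p N f b = (\<Sum>x\<in>vecs p N. epsp p (f x - dotp N b x))"

definition bent :: "nat \<Rightarrow> nat \<Rightarrow> ((nat \<Rightarrow> int) \<Rightarrow> int) \<Rightarrow> bool" where
  "bent p N f \<longleftrightarrow> (\<forall>b\<in>vecs p N. cmod (walsh p N f b) = sqrt (real p) ^ N)"

definition fp_fun :: "nat \<Rightarrow> nat \<Rightarrow> ((nat \<Rightarrow> int) \<Rightarrow> int) \<Rightarrow> bool" where
  "fp_fun p N f \<longleftrightarrow> (\<forall>x\<in>vecs p N. 0 \<le> f x \<and> f x < int p)"

text \<open>F(x, x_{n+1}, y) = f_y(x) + x_{n+1} y (mod p), where for z in F_p^{n+2},
  x = first n coordinates (indices 0..n-1), x_{n+1} = z n, y = z (n+1).\<close>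
definition concatF :: "nat \<Rightarrow> nat \<Rightarrow> (nat \<Rightarrow> (nat \<Rightarrow> int) \<Rightarrow> int) \<Rightarrow> (nat \<Rightarrow> int) \<Rightarrow> int" where
  "concatF p n f z = (f (nat (z (Suc n))) (\<lambda>i. if i < n then z i else 0) + z n * z (Suc n)) mod int p"

end

theory Submission
  imports Defs "HOL-Analysis.Analysis"
begin

lemma epsp_add: "epsp p (a + b) = epsp p a * epsp p b"
  unfolding epsp_def by (simp add: exp_add[symmetric] ring_distribs add_divide_distrib)

lemma epsp_mult_p: "p > 0 \<Longrightarrow> epsp p (int p * m) = 1"
proof -
  assume "p > 0"
  have "epsp p (int p * m) = exp ((2 * of_int m * pi) * \<i>)"
    unfolding epsp_def using \<open>p>0\<close> by (simp add: field_simps)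
  also have "\<dots> = 1" by (rule exp_integer_2pi) simp
  finally show ?thesis .
qed

lemma epsp_mod: "p > 0 \<Longrightarrow> epsp p (k mod int p) = epsp p k"
proof -
  assume p: "p > 0"
  have "epsp p k = epsp p (k mod int p + int p * (k div int p))" by simp
  also have "\<dots> = epsp p (k mod int p)" by (simp only: epsp_add epsp_mult_p[OF p]) simp
  finally show ?thesis by simp
qed

lemma cmod_epsp: "cmod (epsp p k) = 1"
proof -
  have "epsp p k = exp (\<i> * of_real (2 * pi * k / p))"
    unfolding epsp_def by (simp add: field_simps)
  then show ?thesis by simp
qed

lemma epsp_pow: "epsp p (int a * t) = epsp p t ^ a"
  unfolding epsp_def by (simp add: exp_of_nat_mult[symmetric] field_simps)

lemma epsp_ne1:
  assumes "p > 0" "t \<noteq> 0" "\<bar>t\<bar> < int p"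
  shows "epsp p t \<noteq> 1"
proof
  assume "epsp p t = 1"
  then obtain m :: int where m: "Im (2 * of_real pi * \<i> * of_int t / of_nat p) = of_int (2 * m) * pi"
    unfolding epsp_def exp_eq_1 by blast
  have "2 * pi * t / p = 2 * m * pi" using m assms(1) by (simp add: Im_divide power2_eq_square)
  then have "real_of_int t = real p * m" using assms(1) pi_gt_zero by (simp add: field_simps)
  then have "t = int p * m" by (metis of_int_eq_iff of_int_mult of_int_of_nat_eq)
  with assms(2) have "m \<noteq> 0" by auto
  then have "\<bar>m\<bar> \<ge> 1" by linarith
  have "\<bar>t\<bar> = int p * \<bar>m\<bar>" using \<open>t = int p * m\<close> by (simp add: abs_mult)
  also have "\<dots> \<ge> int p * 1" using \<open>\<bar>m\<bar> \<ge> 1\<close> by (intro mult_left_mono) auto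
  finally show False using assms(3) by linarith
qed

lemma geom:
  assumes "p > 0" "\<bar>t\<bar> < int p"
  shows "(\<Sum>a<p. epsp p (int a * t)) = (if t = 0 then of_nat p else 0)"
proof (cases "t = 0")
  case True then show ?thesis by (simp add: epsp_def)
next
  case False
  have "epsp p t ^ p = 1" using epsp_pow[of p p t] epsp_mult_p[OF assms(1), of t] by simp
  then show ?thesis using False epsp_ne1[OF assms(1) False assms(2)]
    by (simp add: epsp_pow sum_gp_strict)
qed

lemma sum_vecs_split:
  "(\<Sum>z\<in>vecs p (n+2). g z) = (\<Sum>x\<in>vecs p n. \<Sum>y<p. \<Sum>a<p. g (x(n := int a, Suc n := int y)))"
proof -
  define h where "h = (\<lambda>(x::nat\<Rightarrow>int,y::nat,a::nat). x(n := int a, Suc n := int y))"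
  have bij: "bij_betw h (vecs p n \<times> {..<p} \<times> {..<p}) (vecs p (n+2))"
    unfolding bij_betw_def
  proof
    show "inj_on h (vecs p n \<times> {..<p} \<times> {..<p})"
    proof (rule inj_onI)
      fix w w' assume w: "w \<in> vecs p n \<times> {..<p} \<times> {..<p}" and w': "w' \<in> vecs p n \<times> {..<p} \<times> {..<p}"
        and ew: "h w = h w'"
      obtain x y a where wd: "w = (x, y, a)" by (cases w) auto
      obtain x' y' a' where wd': "w' = (x', y', a')" by (cases w') auto
      have x: "x \<in> vecs p n" and x': "x' \<in> vecs p n" using w w' wd wd' by auto
      have e: "h (x, y, a) = h (x', y', a')" using ew wd wd' by simp
      have e': "x(n := int a, Suc n := int y) = x'(n := int a', Suc n := int y')" using e by (simp add: h_def)
      from fun_cong[OF e', of n] have "a = a'" by simp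
      moreover from fun_cong[OF e', of "Suc n"] have "y = y'" by simp
      moreover have "x = x'"
      proof
        fix i show "x i = x' i"
        proof (cases "i < n")
          case True then show ?thesis using fun_cong[OF e', of i] by simp
        next
          case False then show ?thesis using x x' by (simp add: vecs_def)
        qed
      qed
      ultimately show "w = w'" using wd wd' by simp
    qed
    show "h ` (vecs p n \<times> {..<p} \<times> {..<p}) = vecs p (n+2)"
    proof
      show "h ` (vecs p n \<times> {..<p} \<times> {..<p}) \<subseteq> vecs p (n+2)"
        by (auto simp: h_def vecs_def)
      show "vecs p (n+2) \<subseteq> h ` (vecs p n \<times> {..<p} \<times> {..<p})"
      proof
        fix z assume z: "z \<in> vecs p (n+2)"
        have z1: "0 \<le> z n" "z n < int p" "0 \<le> z (Suc n)" "z (Suc n) < int p"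
          using z by (auto simp: vecs_def)
        have "z = h (z(n:=0, Suc n:=0), nat (z (Suc n)), nat (z n))"
          using z1 by (auto simp: h_def)
        moreover have "z(n:=0, Suc n:=0) \<in> vecs p n" using z by (auto simp: vecs_def)
        moreover have "nat (z (Suc n)) < p" "nat (z n) < p" using z1 by auto
        ultimately show "z \<in> h ` (vecs p n \<times> {..<p} \<times> {..<p})" by blast
      qed
    qed
  qed
  have "(\<Sum>z\<in>vecs p (n+2). g z) = (\<Sum>w\<in>vecs p n \<times> {..<p} \<times> {..<p}. g (h w))"
    using sum.reindex_bij_betw[OF bij, of g] by simp
  also have "\<dots> = (\<Sum>x\<in>vecs p n. \<Sum>w\<in>{..<p} \<times> {..<p}. g (h (x, w)))"
    by (simp add: sum.cartesian_product)
  also have "\<dots> = (\<Sum>x\<in>vecs p n. \<Sum>y<p. \<Sum>a<p. g (h (x, y, a)))"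
    by (simp add: sum.cartesian_product)
  finally show ?thesis by (simp add: h_def)
qed

lemma walsh_concat:
  assumes p: "p > 0" and b: "b \<in> vecs p (n+2)"
  shows "walsh p (n+2) (concatF p n f) b
     = of_nat p * epsp p (- (b (Suc n) * b n)) * walsh p n (f (nat (b n))) b"
proof -
  define c where "c = b n"
  define d where "d = b (Suc n)"
  have c: "0 \<le> c" "c < int p" using b by (auto simp: vecs_def c_def)
  define E where "E = (\<lambda>x y. epsp p (f y x - dotp n b x - d * int y))"
  have tm: "epsp p (concatF p n f (x(n := int a, Suc n := int y)) - dotp (Suc (Suc n)) b (x(n := int a, Suc n := int y)))
      = E x y * epsp p (int a * (int y - c))" if x: "x \<in> vecs p n" for x y a
  proof -
    have r: "(\<lambda>i. if i < n then (x(n := int a, Suc n := int y)) i else 0) = x"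
      using x by (auto simp: vecs_def)
    have dsum: "(\<Sum>i<n. b i * (x(n := int a, Suc n := int y)) i) = dotp n b x"
      unfolding dotp_def by (rule sum.cong) auto
    have dp: "dotp (Suc (Suc n)) b (x(n := int a, Suc n := int y)) = dotp n b x + c * int a + d * int y"
      using dsum by (simp add: dotp_def c_def d_def numeral_2_eq_2)
    have "epsp p (concatF p n f (x(n := int a, Suc n := int y)) - dotp (Suc (Suc n)) b (x(n := int a, Suc n := int y)))
        = epsp p ((f y x + int a * int y) mod int p - (dotp n b x + c * int a + d * int y))"
      unfolding concatF_def r dp by simp
    also have "\<dots> = epsp p ((f y x + int a * int y) mod int p) * epsp p (- (dotp n b x + c * int a + d * int y))"
      by (metis diff_conv_add_uminus epsp_add)
    also have "\<dots> = epsp p (f y x + int a * int y) * epsp p (- (dotp n b x + c * int a + d * int y))"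
      by (simp add: epsp_mod[OF p])
    also have "\<dots> = epsp p ((f y x - dotp n b x - d * int y) + int a * (int y - c))"
      by (simp add: epsp_add[symmetric] algebra_simps)
    also have "\<dots> = E x y * epsp p (int a * (int y - c))"
      by (simp add: E_def epsp_add)
    finally show ?thesis .
  qed
  have inner: "(\<Sum>y<p. \<Sum>a<p. E x y * epsp p (int a * (int y - c)))
      = of_nat p * E x (nat c)" for x
  proof -
    have "(\<Sum>y<p. \<Sum>a<p. E x y * epsp p (int a * (int y - c)))
        = (\<Sum>y<p. E x y * (\<Sum>a<p. epsp p (int a * (int y - c))))"
      by (simp add: sum_distrib_left)
    also have "\<dots> = (\<Sum>y<p. if y = nat c then of_nat p * E x y else 0)"
    proof (rule sum.cong)
      fix y assume "y \<in> {..<p}"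
      then have "\<bar>int y - c\<bar> < int p" using c by auto
      then show "E x y * (\<Sum>a<p. epsp p (int a * (int y - c))) = (if y = nat c then of_nat p * E x y else 0)"
        using geom[OF p] c by auto
    qed simp
    also have "\<dots> = of_nat p * E x (nat c)"
      using c by (simp add: sum.delta)
    finally show ?thesis .
  qed
  have "walsh p (n+2) (concatF p n f) b
      = (\<Sum>x\<in>vecs p n. \<Sum>y<p. \<Sum>a<p. E x y * epsp p (int a * (int y - c)))"
    unfolding walsh_def sum_vecs_split by (intro sum.cong refl) (simp add: tm)
  also have "\<dots> = (\<Sum>x\<in>vecs p n. of_nat p * E x (nat c))" by (simp add: inner)
  also have "\<dots> = (\<Sum>x\<in>vecs p n. of_nat p * epsp p (- (d * c)) * epsp p (f (nat c) x - dotp n b x))"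
  proof (rule sum.cong)
    fix x show "of_nat p * E x (nat c) = of_nat p * epsp p (- (d * c)) * epsp p (f (nat c) x - dotp n b x)"
      using c by (simp add: E_def epsp_add[symmetric] algebra_simps)
  qed simp
  also have "\<dots> = of_nat p * epsp p (- (d * c)) * walsh p n (f (nat c)) b"
    by (simp add: walsh_def sum_distrib_left)
  finally show ?thesis by (simp add: c_def d_def)
qed

lemma walsh_cong_b:
  assumes "\<And>i. i < n \<Longrightarrow> b i = b' i"
  shows "walsh p n g b = walsh p n g b'"
  unfolding walsh_def dotp_def using assms by simp

lemma cmod_walsh_concat:
  assumes p: "p > 0" and b: "b \<in> vecs p (n+2)"
  shows "cmod (walsh p (n+2) (concatF p n f) b) = real p * cmod (walsh p n (f (nat (b n))) b)"
  unfolding walsh_concat[OF p b] by (simp add: norm_mult cmod_epsp)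

lemma sqrt_pow: "sqrt (real p) ^ (n+2) = real p * sqrt (real p) ^ n"
  by (simp add: power_add)

theorem proposition1:
  fixes p n :: nat and f :: "nat \<Rightarrow> (nat \<Rightarrow> int) \<Rightarrow> int"
  assumes "prime p" and "n > 0"
    and "\<forall>j<p. fp_fun p n (f j)"
  shows "bent p (n + 2) (concatF p n f) \<longleftrightarrow> (\<forall>j<p. bent p n (f j))"
proof
  have p: "p > 0" using assms(1) prime_gt_0_nat by blast
  have pr: "real p > 0" using p by simp
  {
    assume B: "bent p (n + 2) (concatF p n f)"
    show "\<forall>j<p. bent p n (f j)"
    proof (intro allI impI)
      fix j assume j: "j < p"
      show "bent p n (f j)" unfolding bent_def
      proof
        fix b assume b: "b \<in> vecs p n"
        define B' where "B' = b(n := int j)"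
        have B': "B' \<in> vecs p (n+2)"
          using b j p unfolding vecs_def B'_def
          by (auto, (metis linorder_not_le order_refl of_nat_0_less_iff)+)
        have "real p * cmod (walsh p n (f j) b) = sqrt (real p) ^ (n+2)"
          using B B' cmod_walsh_concat[OF p B', of f] walsh_cong_b[of n B' b p "f j"]
          unfolding bent_def by (simp add: B'_def)
        then have "real p * cmod (walsh p n (f j) b) = real p * sqrt (real p) ^ n"
          by (simp only: sqrt_pow)
        then show "cmod (walsh p n (f j) b) = sqrt (real p) ^ n"
          using pr by simp
      qed
    qed
  }
  {
    assume A: "\<forall>j<p. bent p n (f j)"
    show "bent p (n + 2) (concatF p n f)" unfolding bent_def
    proof
      fix b assume b: "b \<in> vecs p (n+2)"
      define b' where "b' = b(n := 0, Suc n := 0)"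
      have b': "b' \<in> vecs p n" using b by (auto simp: vecs_def b'_def)
      have c0: "0 \<le> b n \<and> b n < int p" using b unfolding vecs_def by simp
      then have c: "nat (b n) < p" by linarith
      have "cmod (walsh p n (f (nat (b n))) b') = sqrt (real p) ^ n"
        using A c b' unfolding bent_def by blast
      moreover have "walsh p n (f (nat (b n))) b = walsh p n (f (nat (b n))) b'"
        by (rule walsh_cong_b) (simp add: b'_def)
      ultimately show "cmod (walsh p (n + 2) (concatF p n f) b) = sqrt (real p) ^ (n + 2)"
        using cmod_walsh_concat[OF p b, of f] by (simp add: sqrt_pow)
    qed
  }
qed

end
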